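(* Assume (A1)–(A5) hold, and let $\{u_k\}_{k\ge0}$ be the exact-data iteration defined below. Then $u_k\in\mathcal B_\wp(u^\dagger)$ for all $k\ge0$, and $$\|u_{k+1}-u^\dagger\|^2-\|u_k-u^\dagger\|^2\le-2\mathcal C_0\|\mathcal F(u_k)-v\|^2\qquad\text{for all }k\ge0,$$ where $\mathcal C_0:=(1-\eta)\zeta-\nu_0(\wp+\nu_1)-\zeta_0^2>0$. Consequently $\{\|u_k-u^\dagger\|\}_{k\ge0}$ is monotonically decreasing, and $$\sum_{k=0}^\infty\|\mathcal F(u_k)-v\|^2\le\frac1{2\mathcal C_0}\|u_0-u^\dagger\|^2<\infty .$$
   Context: Spaces and operator. Let $\mathcal U=\mathbb R^N$ and $\mathcal V=\mathbb R^M$ carry the Euclidean inner product and norm. Let $\mathcal F:\mathcal D(\mathcal F)\subset\mathcal U\to\mathcal V$ be a (possibly nonlinear) operator, let $v\in\mathcal V$ be exact data, and let $\mathcal B_r(x)$ denote the closed ball of radius $r$ centred at $x$. Images and graph Laplacian. Elements of $\mathcal U$ are images on a pixel grid $\mathcal S=\{1,\dots,p\}\times\{1,\dots,q\}$ with $N=pq$. Fix $R\in(0,\infty)$, $\lambda>0$ and a metric $d$ on $\mathcal S$. For $u\in\mathcal U$, define $$(W_u)_{ab}=\mathbf 1_{(0,R]}(d(a,b))\exp(-|u(a)-u(b)|^2/\lambda),$$ let $D_u$ be the diagonal matrix of row sums of $W_u$, and set $\Delta_u=D_u-W_u$. Exact-data iteration. Let $\Psi:\mathcal V\to\mathcal U$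 be a reconstruction map and set $u_0=\Psi(v)$. Define $$u_{k+1}=u_k-\alpha_k\mathcal F'(u_k)^*\big(\mathcal F(u_k)-v\big)-\beta_k\Delta_{u_k}u_k,$$ with $$\alpha_k=\min\Big\{\frac{\zeta_0\|\mathcal F(u_k)-v\|}{\|\mathcal F'(u_k)^*(\mathcal F(u_k)-v)\|},\zeta_1\Big\}.$$ If $\|\Delta_{u_k}u_k\|\ne0$, then $$\beta_k=\min\Big\{\frac{\nu_0\|\mathcal F(u_k)-v\|^2}{\|\Delta_{u_k}u_k\|},\frac{\nu_1}{\|\Delta_{u_k}u_k\|},\nu_2\Big\},$$ and otherwise $\beta_k=0$. Here $\zeta_0,\zeta_1,\nu_0,\nu_1,\nu_2>0$ are constants, and $\zeta>0$ is a constant with $\zeta\le\alpha_k$ for all $k$. Operator assumptions. There exist $\wp>0$, $B>0$, $\eta\in[0,1)$ and $L\ge0$ such that for all $u,w\in\mathcal B_{3\wp}(u_0)\subset\mathcal D(\mathcal F)$: - (A1) $\mathcal F$ is Fréchet differentiable with $u\mapsto\mathcal F'(u)$ continuous; - (A2) $\|\mathcal F'(u)\|\le B$; - (A3) $\|\mathcal F(u)-\mathcal F(w)-\mathcal F'(w)(u-w)\|\le\eta\|\mathcal F(u)-\mathcal F(w)\|$; - (A4) $\|\mathcal F'(u)-\mathcal F'(w)\|\le L\|u-w\|$; - (A5) there exists $u^\dagger\in\mathcal B_\wp(u_0)$ with $\mathcal F(u^\dagger)=v$. Standing parameter condition. Fix $\mathcal H>\frac{1+\eta}{1-\eta}$.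 The constant $\zeta$ is assumed to satisfy $$\zeta>\frac{\nu_0(\wp+\nu_1)+\zeta_0^2}{1-\eta-\frac{1+\eta}{\mathcal H}} .$$ *)

theory Defs
  imports "HOL-Analysis.Analysis"
begin

text \<open>Images on the pixel grid {1..p} x {1..q} are modelled as vectors indexed by
  the finite product type 'p \<times> 'q; an image is u :: real^('p \<times> 'q).\<close>

definition is_metric_on_pixels :: "('a \<Rightarrow> 'a \<Rightarrow> real) \<Rightarrow> bool" where
  "is_metric_on_pixels d \<longleftrightarrow>
     (\<forall>a b. 0 \<le> d a b) \<and> (\<forall>a b. d a b = 0 \<longleftrightarrow> a = b) \<and>
     (\<forall>a b. d a b = d b a) \<and> (\<forall>a b c. d a c \<le> d a b + d b c)"

definition graph_weight ::
  "('a::finite \<Rightarrow> 'a \<Rightarrow> real) \<Rightarrow> real \<Rightarrow> real \<Rightarrow> real^'a \<Rightarrow> real^'a^'a" where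
  "graph_weight d R lam u =
     (\<chi> a b. (if 0 < d a b \<and> d a b \<le> R then 1 else 0) * exp (- (\<bar>u $ a - u $ b\<bar>)\<^sup>2 / lam))"

definition graph_degree ::
  "('a::finite \<Rightarrow> 'a \<Rightarrow> real) \<Rightarrow> real \<Rightarrow> real \<Rightarrow> real^'a \<Rightarrow> real^'a^'a" where
  "graph_degree d R lam u =
     (\<chi> a b. if a = b then (\<Sum>c\<in>UNIV. graph_weight d R lam u $ a $ c) else 0)"

definition graph_laplacian ::
  "('a::finite \<Rightarrow> 'a \<Rightarrow> real) \<Rightarrow> real \<Rightarrow> real \<Rightarrow> real^'a \<Rightarrow> real^'a^'a" where
  "graph_laplacian d R lam u = graph_degree d R lam u - graph_weight d R lam u"

end

theory Submission
  imports Defs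
begin

lemma sq_sum_le: "((p::real) + q)\<^sup>2 \<le> 2 * p\<^sup>2 + 2 * q\<^sup>2"
proof -
  have "0 \<le> (p - q)\<^sup>2" by simp
  thus ?thesis by (simp add: power2_diff power2_sum)
qed

lemma step_ineq:
  fixes e g D :: "'a::real_inner"
  assumes a: "zeta \<le> a" "0 < zeta" and b: "0 \<le> b"
    and ag: "a * norm g \<le> zeta0 * rho" and bD1: "b * norm D \<le> nu0 * rho\<^sup>2"
    and bD2: "b * norm D \<le> nu1" and e: "norm e \<le> wp"
    and eg: "e \<bullet> g \<ge> (1 - eta) * rho\<^sup>2" and eta: "eta < 1" and rho: "0 \<le> rho"
    and nu0: "0 < nu0"
  shows "(norm (e - (a *\<^sub>R g + b *\<^sub>R D)))\<^sup>2 - (norm e)\<^sup>2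
         \<le> - 2 * ((1 - eta) * zeta - nu0 * (wp + nu1) - zeta0\<^sup>2) * rho\<^sup>2"
proof -
  let ?w = "a *\<^sub>R g + b *\<^sub>R D"
  have exp: "(norm (e - ?w))\<^sup>2 = (norm e)\<^sup>2 - 2 * (e \<bullet> ?w) + (norm ?w)\<^sup>2"
    by (simp add: power2_norm_eq_inner inner_diff_left inner_diff_right inner_commute)
  have ew: "e \<bullet> ?w = a * (e \<bullet> g) + b * (e \<bullet> D)"
    by (simp add: inner_add_right)
  have ag0: "0 \<le> a * norm g" using a by simp
  have bD0: "0 \<le> b * norm D" using b by simp
  have nw: "norm ?w \<le> a * norm g + b * norm D"
    using norm_triangle_ineq[of "a *\<^sub>R g" "b *\<^sub>R D"] a b by simp
  have sq: "(norm ?w)\<^sup>2 \<le> (a * norm g + b * norm D)\<^sup>2"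
    using nw by (simp add: power_mono)
  have sq2: "(a * norm g + b * norm D)\<^sup>2 \<le> 2 * (a * norm g)\<^sup>2 + 2 * (b * norm D)\<^sup>2"
    using sq_sum_le by blast
  have "(a * norm g)\<^sup>2 \<le> (zeta0 * rho)\<^sup>2"
    using ag ag0 by (simp add: power_mono)
  hence s1: "(a * norm g)\<^sup>2 \<le> zeta0\<^sup>2 * rho\<^sup>2" by (simp add: power_mult_distrib)
  have s2: "(b * norm D)\<^sup>2 \<le> nu1 * (nu0 * rho\<^sup>2)"
    using mult_mono[OF bD2 bD1] bD0 bD2 by (simp add: power2_eq_square)
  have w2: "(norm ?w)\<^sup>2 \<le> 2 * zeta0\<^sup>2 * rho\<^sup>2 + 2 * nu1 * nu0 * rho\<^sup>2"
    using sq sq2 s1 s2 by linarith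
  have "- (e \<bullet> D) \<le> norm e * norm D"
    using Cauchy_Schwarz_ineq2[of e D] by (simp add: abs_le_iff)
  hence "- (b * (e \<bullet> D)) \<le> b * (norm e * norm D)" using b
    by (metis minus_mult_right mult_left_mono)
  also have "\<dots> \<le> wp * (b * norm D)"
  proof -
    have "norm e * norm D \<le> wp * norm D" using e by (simp add: mult_right_mono)
    thus ?thesis using b by (simp add: mult_left_mono mult.left_commute)
  qed
  also have "\<dots> \<le> wp * (nu0 * rho\<^sup>2)"
    using bD1 e norm_ge_zero[of e] by (meson mult_left_mono order.trans)
  finally have t2: "- (b * (e \<bullet> D)) \<le> wp * nu0 * rho\<^sup>2" by simp
  have "zeta * ((1 - eta) * rho\<^sup>2) \<le> a * ((1 - eta) * rho\<^sup>2)"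
    using a eta by (intro mult_right_mono) auto
  also have "\<dots> \<le> a * (e \<bullet> g)" using eg a by (intro mult_left_mono) auto
  finally have t1: "zeta * ((1 - eta) * rho\<^sup>2) \<le> a * (e \<bullet> g)" .
  show ?thesis using exp ew w2 t1 t2 by (simp add: algebra_simps)
qed
theorem mainTheorem3:
  fixes F :: "real^('p::finite \<times> 'q::finite) \<Rightarrow> real^'m::finite"
    and F' :: "real^('p \<times> 'q) \<Rightarrow> (real^('p \<times> 'q) \<Rightarrow> real^'m)"
    and Dom :: "(real^('p \<times> 'q)) set"
    and v :: "real^'m"
    and d :: "'p \<times> 'q \<Rightarrow> 'p \<times> 'q \<Rightarrow> real"
    and R lam :: real
    and Psi :: "real^'m \<Rightarrow> real^('p \<times> 'q)"
    and u :: "nat \<Rightarrow> real^('p \<times> 'q)"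
    and alpha beta :: "nat \<Rightarrow> real"
    and zeta0 zeta1 nu0 nu1 nu2 zeta :: real
    and wp B eta L H :: real
    and udag :: "real^('p \<times> 'q)"
  assumes R_pos: "0 < R" and lam_pos: "0 < lam"
    and d_metric: "is_metric_on_pixels d"
    and consts_pos: "0 < zeta0" "0 < zeta1" "0 < nu0" "0 < nu1" "0 < nu2" "0 < zeta"
    and wp_pos: "0 < wp" and B_pos: "0 < B" and eta: "0 \<le> eta" "eta < 1" and L_nonneg: "0 \<le> L"
    and u0: "u 0 = Psi v"
    and alpha_def: "\<And>k. alpha k = min (zeta0 * norm (F (u k) - v)
                          / norm (adjoint (F' (u k)) (F (u k) - v))) zeta1"
    and beta_def: "\<And>k. beta k =
          (if norm (graph_laplacian d R lam (u k) *v u k) \<noteq> 0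
           then min (min (nu0 * (norm (F (u k) - v))\<^sup>2 / norm (graph_laplacian d R lam (u k) *v u k))
                         (nu1 / norm (graph_laplacian d R lam (u k) *v u k))) nu2
           else 0)"
    and iter: "\<And>k. u (Suc k) = u k - alpha k *\<^sub>R adjoint (F' (u k)) (F (u k) - v)
                                      - beta k *\<^sub>R (graph_laplacian d R lam (u k) *v u k)"
    and zeta_le_alpha: "\<And>k. zeta \<le> alpha k"
    and ball_dom: "cball (u 0) (3 * wp) \<subseteq> Dom"
    and A1: "\<And>w. w \<in> cball (u 0) (3 * wp) \<Longrightarrow> (F has_derivative F' w) (at w within Dom)"
    and A1_cont: "continuous_on (cball (u 0) (3 * wp)) F'"
    and A2: "\<And>w. w \<in> cball (u 0) (3 * wp) \<Longrightarrow> onorm (F' w) \<le> B"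
    and A3: "\<And>x w. x \<in> cball (u 0) (3 * wp) \<Longrightarrow> w \<in> cball (u 0) (3 * wp) \<Longrightarrow>
               norm (F x - F w - F' w (x - w)) \<le> eta * norm (F x - F w)"
    and A4: "\<And>x w. x \<in> cball (u 0) (3 * wp) \<Longrightarrow> w \<in> cball (u 0) (3 * wp) \<Longrightarrow>
               onorm (\<lambda>h. F' x h - F' w h) \<le> L * norm (x - w)"
    and A5: "udag \<in> cball (u 0) wp" "F udag = v"
    and H: "H > (1 + eta) / (1 - eta)"
    and zeta_big: "zeta > (nu0 * (wp + nu1) + zeta0\<^sup>2) / (1 - eta - (1 + eta) / H)"
  shows "(\<forall>k. u k \<in> cball udag wp)
    \<and> (\<forall>k. (norm (u (Suc k) - udag))\<^sup>2 - (norm (u k - udag))\<^sup>2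
            \<le> - 2 * ((1 - eta) * zeta - nu0 * (wp + nu1) - zeta0\<^sup>2) * (norm (F (u k) - v))\<^sup>2)
    \<and> (1 - eta) * zeta - nu0 * (wp + nu1) - zeta0\<^sup>2 > 0
    \<and> decseq (\<lambda>k. norm (u k - udag))
    \<and> summable (\<lambda>k. (norm (F (u k) - v))\<^sup>2)
    \<and> (\<Sum>k. (norm (F (u k) - v))\<^sup>2)
        \<le> (norm (u 0 - udag))\<^sup>2 / (2 * ((1 - eta) * zeta - nu0 * (wp + nu1) - zeta0\<^sup>2))"
proof -
  define C0 where "C0 = (1 - eta) * zeta - nu0 * (wp + nu1) - zeta0\<^sup>2"
  let ?Lap = "\<lambda>k. graph_laplacian d R lam (u k) *v u k"
  have C0pos: "C0 > 0"
  proof -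
    have H0: "(1 + eta) / (1 - eta) > 0" using eta by simp
    hence Hp: "H > 0" using H by linarith
    have "(1 + eta) < H * (1 - eta)" using H eta by (simp add: divide_less_eq mult.commute)
    hence "(1 + eta) / H < 1 - eta" using Hp by (simp add: divide_less_eq mult.commute)
    hence Dp: "0 < 1 - eta - (1 + eta) / H" by simp
    have Dle: "1 - eta - (1 + eta) / H \<le> 1 - eta" using Hp eta by simp
    define X where "X = nu0 * (wp + nu1) + zeta0\<^sup>2"
    have Xp: "X > 0" unfolding X_def using consts_pos wp_pos by (simp add: add_pos_nonneg)
    have "X / (1 - eta) \<le> X / (1 - eta - (1 + eta) / H)"
      using Xp Dp Dle by (intro divide_left_mono) auto
    hence "X / (1 - eta) < zeta" using zeta_big X_def by simp
    hence "X < zeta * (1 - eta)" using eta by (simp add: divide_less_eq)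
    thus ?thesis unfolding C0_def X_def by (simp add: algebra_simps)
  qed
  have step: "(norm (u (Suc k) - udag))\<^sup>2 - (norm (u k - udag))\<^sup>2
            \<le> - 2 * C0 * (norm (F (u k) - v))\<^sup>2" if uk: "u k \<in> cball udag wp" for k
  proof -
    let ?x = "u k" let ?e = "u k - udag" let ?r = "F (u k) - v" let ?A = "F' (u k)"
    let ?g = "adjoint ?A ?r"
    have u0d: "udag \<in> cball (u 0) (3 * wp)" using A5(1) wp_pos by auto
    have xin: "?x \<in> cball (u 0) (3 * wp)"
    proof -
      have "dist (u 0) ?x \<le> dist (u 0) udag + dist udag ?x" by (rule dist_triangle)
      thus ?thesis using A5(1) uk wp_pos by auto
    qed
    have lin: "linear ?A"
      using has_derivative_bounded_linear[OF A1[OF xin]] bounded_linear.linear by blast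
    have a3: "norm (F udag - F ?x - ?A (udag - ?x)) \<le> eta * norm (F udag - F ?x)"
      using A3[OF u0d xin] .
    have eqA: "F udag - F ?x - ?A (udag - ?x) = ?A ?e - ?r"
    proof -
      have "udag - ?x = - ?e" by simp
      hence "?A (udag - ?x) = - ?A ?e" using linear_neg[OF lin, of ?e] by metis
      thus ?thesis using A5(2) by (simp add: algebra_simps)
    qed
    have nn: "norm (F udag - F ?x) = norm ?r" using A5(2) by (simp add: norm_minus_commute)
    have a3': "norm (?A ?e - ?r) \<le> eta * norm ?r" using a3 unfolding eqA nn .
    have eg: "?e \<bullet> ?g = ?A ?e \<bullet> ?r" by (rule adjoint_works[OF lin])
    have "?A ?e \<bullet> ?r = ?r \<bullet> ?r + (?A ?e - ?r) \<bullet> ?r" by (simp add: inner_diff_left)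
    moreover have "\<bar>(?A ?e - ?r) \<bullet> ?r\<bar> \<le> norm (?A ?e - ?r) * norm ?r" by (rule Cauchy_Schwarz_ineq2)
    moreover have "norm (?A ?e - ?r) * norm ?r \<le> eta * norm ?r * norm ?r"
      using a3' by (simp add: mult_right_mono)
    moreover have "?r \<bullet> ?r = (norm ?r)\<^sup>2" by (simp add: power2_norm_eq_inner)
    ultimately have egb: "?e \<bullet> ?g \<ge> (1 - eta) * (norm ?r)\<^sup>2" using eg
      by (simp add: algebra_simps power2_eq_square abs_le_iff)
    have apos: "0 < alpha k" using zeta_le_alpha[of k] consts_pos by linarith
    have ag: "alpha k * norm ?g \<le> zeta0 * norm ?r"
    proof (cases "norm ?g = 0")
      case True thus ?thesis using consts_pos by simp
    next
      case False
      hence gp: "norm ?g > 0" by simp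
      have "alpha k \<le> zeta0 * norm ?r / norm ?g" using alpha_def[of k] by simp
      thus ?thesis using gp by (simp add: le_divide_eq)
    qed
    have bD: "0 \<le> beta k \<and> beta k * norm (?Lap k) \<le> nu0 * (norm ?r)\<^sup>2
              \<and> beta k * norm (?Lap k) \<le> nu1"
    proof (cases "norm (?Lap k) = 0")
      case True thus ?thesis using beta_def[of k] consts_pos by simp
    next
      case False
      hence p: "norm (?Lap k) > 0" by simp
      have b: "beta k = min (min (nu0 * (norm ?r)\<^sup>2 / norm (?Lap k)) (nu1 / norm (?Lap k))) nu2"
        using beta_def[of k] False by simp
      have "0 \<le> beta k" unfolding b using p consts_pos by simp
      moreover have "beta k \<le> nu0 * (norm ?r)\<^sup>2 / norm (?Lap k)" unfolding b by simp
      moreover have "beta k \<le> nu1 / norm (?Lap k)" unfolding b by simp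
      ultimately show ?thesis using p by (simp add: le_divide_eq)
    qed
    have en: "norm ?e \<le> wp" using uk by (simp add: dist_norm norm_minus_commute)
    have si: "(norm (?e - (alpha k *\<^sub>R ?g + beta k *\<^sub>R ?Lap k)))\<^sup>2 - (norm ?e)\<^sup>2
         \<le> - 2 * ((1 - eta) * zeta - nu0 * (wp + nu1) - zeta0\<^sup>2) * (norm ?r)\<^sup>2"
      by (rule step_ineq[OF zeta_le_alpha[of k] consts_pos(6)]) (use bD ag en egb eta consts_pos in auto)
    have eqS: "u (Suc k) - udag = ?e - (alpha k *\<^sub>R ?g + beta k *\<^sub>R ?Lap k)"
      using iter[of k] by (simp add: algebra_simps)
    show ?thesis unfolding C0_def eqS by (rule si)
  qed
  have mono: "norm (u (Suc k) - udag) \<le> norm (u k - udag)" if "u k \<in> cball udag wp" for k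
  proof -
    have "(norm (u (Suc k) - udag))\<^sup>2 \<le> (norm (u k - udag))\<^sup>2"
    proof -
      have "0 \<le> 2 * C0 * (norm (F (u k) - v))\<^sup>2" using C0pos by simp
      thus ?thesis using step[OF that] by linarith
    qed
    thus ?thesis by (rule power2_le_imp_le[OF _ norm_ge_zero])
  qed
  have ball: "\<forall>k. u k \<in> cball udag wp"
  proof
    fix k show "u k \<in> cball udag wp"
    proof (induction k)
      case 0 thus ?case using A5(1) by (simp add: dist_commute)
    next
      case (Suc k)
      thus ?case using mono[OF Suc] by (simp add: dist_norm norm_minus_commute)
    qed
  qed
  have stepall: "\<forall>k. (norm (u (Suc k) - udag))\<^sup>2 - (norm (u k - udag))\<^sup>2
            \<le> - 2 * C0 * (norm (F (u k) - v))\<^sup>2" using step ball by blast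
  have dec: "decseq (\<lambda>k. norm (u k - udag))"
    unfolding decseq_Suc_iff using mono ball by blast
  have partial: "2 * C0 * (\<Sum>k<n. (norm (F (u k) - v))\<^sup>2) \<le> (norm (u 0 - udag))\<^sup>2 - (norm (u n - udag))\<^sup>2" for n
  proof (induction n)
    case 0 thus ?case by simp
  next
    case (Suc n)
    have "2 * C0 * (\<Sum>k<Suc n. (norm (F (u k) - v))\<^sup>2)
        = 2 * C0 * (\<Sum>k<n. (norm (F (u k) - v))\<^sup>2) + 2 * C0 * (norm (F (u n) - v))\<^sup>2"
      by (simp add: algebra_simps)
    thus ?case using Suc stepall[rule_format, of n] by linarith
  qed
  have pb: "(\<Sum>k<n. (norm (F (u k) - v))\<^sup>2) \<le> (norm (u 0 - udag))\<^sup>2 / (2 * C0)" for n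
  proof -
    have "2 * C0 * (\<Sum>k<n. (norm (F (u k) - v))\<^sup>2) \<le> (norm (u 0 - udag))\<^sup>2"
      using partial[of n] zero_le_power2[of "norm (u n - udag)"] by linarith
    thus ?thesis using C0pos by (simp add: le_divide_eq mult.commute)
  qed
  have summ: "summable (\<lambda>k. (norm (F (u k) - v))\<^sup>2)"
  proof (rule bounded_imp_summable)
    fix n show "(\<Sum>k\<le>n. (norm (F (u k) - v))\<^sup>2) \<le> (norm (u 0 - udag))\<^sup>2 / (2 * C0)"
      using pb[of "Suc n"] by (simp add: lessThan_Suc_atMost)
  qed simp
  have sumle: "(\<Sum>k. (norm (F (u k) - v))\<^sup>2) \<le> (norm (u 0 - udag))\<^sup>2 / (2 * C0)"
    by (rule suminf_le_const[OF summ pb])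
  show ?thesis using ball stepall C0pos dec summ sumle unfolding C0_def by blast
qed

end
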